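(* Let $Q$ be a square region of width (side length) $R$ and let $r$ be an awake robot positioned at the center of $Q$ which knows $Q$ and the initial positions of a set $S$ of sleeping robots whose initial positions all lie in $Q$. If no robot other than those in $\{r\}\cup S$ takes action in $Q$, then $r$ can wake up all robots of $S$ within time $5R$.
   Context: Model: robots in the Euclidean plane; sleeping robots do nothing until woken. Awake robots know the global coordinates, share a global clock, can compute, move at speed $1$ (distance $\delta$ takes time $\delta$) or wait, and exchange information only with co-located robots. An awake robot co-located with a sleeping robot can wake it up and share information with it; the woken robot then acts as an awake robot (in particular it can help wake up others). *)

theory Defs
  imports "HOL-Analysis.Analysis"
begin

definition square :: "real^2 \<Rightarrow> real^2 \<Rightarrow> real^2 \<Rightarrow> real \<Rightarrow> (real^2) set" where
  "square c u v R = {c + a *\<^sub>R u + b *\<^sub>R v | a b. \<bar>a\<bar> \<le> R / 2 \<and> \<bar>b\<bar> \<le> R / 2}"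

definition wakeup_schedule ::
  "'a \<Rightarrow> real^2 \<Rightarrow> 'a set \<Rightarrow> ('a \<Rightarrow> real^2) \<Rightarrow> ('a \<Rightarrow> real \<Rightarrow> real^2)
     \<Rightarrow> ('a \<Rightarrow> real) \<Rightarrow> ('a \<Rightarrow> 'a) \<Rightarrow> bool" where
  "wakeup_schedule r c S pos traj wake waker \<longleftrightarrow>
     wake r = 0 \<and> traj r 0 = c \<and>
     (\<forall>p\<in>insert r S. \<forall>t t'. dist (traj p t) (traj p t') \<le> \<bar>t - t'\<bar>) \<and>
     (\<forall>s\<in>S. \<forall>t. t \<le> wake s \<longrightarrow> traj s t = pos s) \<and>
     (\<forall>s\<in>S. 0 \<le> wake s \<and> waker s \<in> insert r S \<and>
        (waker s = r \<or> wake (waker s) < wake s) \<and>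
        traj (waker s) (wake s) = pos s)"

end

theory Submission
  imports Defs
begin

definition lip :: "(real \<Rightarrow> 'p::metric_space) \<Rightarrow> bool" where
  "lip f \<longleftrightarrow> (\<forall>t t'. dist (f t) (f t') \<le> \<bar>t - t'\<bar>)"

definition sched :: "('a \<Rightarrow> 'p::real_normed_vector) \<Rightarrow> 'a \<Rightarrow> 'p \<Rightarrow> real \<Rightarrow> 'a set \<Rightarrow> real \<Rightarrow> bool" where
  "sched pos r p t0 S T \<longleftrightarrow> (\<exists>traj wake waker.
     (\<forall>t. t \<le> t0 \<longrightarrow> traj r t = p) \<and> (\<forall>x\<in>insert r S. lip (traj x)) \<and>
     (\<forall>s\<in>S. \<forall>t. t \<le> wake s \<longrightarrow> traj s t = pos s) \<and>
     (\<forall>s\<in>S. t0 \<le> wake s \<and> wake s \<le> T \<and> waker s \<in> insert r S \<and>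
        (waker s = r \<or> wake (waker s) < wake s) \<and> traj (waker s) (wake s) = pos s))"

lemma sched_empty: "sched pos r p t0 {} T"
  unfolding sched_def by (rule exI[of _ "\<lambda>_ _. p"]) (auto simp: lip_def)

lemma lip_glue:
  assumes "lip g" "lip h" "g T0 = h T0"
  shows "lip (\<lambda>t. if t \<le> T0 then g t else h t)"
  unfolding lip_def
proof (intro allI)
  fix t t'
  have gh: "dist (g a) (h b) \<le> \<bar>a - b\<bar>" if "a \<le> T0" "\<not> b \<le> T0" for a b
  proof -
    have "dist (g a) (h b) \<le> dist (g a) (g T0) + dist (g T0) (h b)" by (rule dist_triangle)
    also have "dist (g T0) (h b) = dist (h T0) (h b)" using assms(3) by simp
    also have "dist (g a) (g T0) \<le> \<bar>a - T0\<bar>" using assms(1) unfolding lip_def by blast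
    also have "dist (h T0) (h b) \<le> \<bar>T0 - b\<bar>" using assms(2) unfolding lip_def by blast
    finally show ?thesis using that by linarith
  qed
  show "dist (if t \<le> T0 then g t else h t) (if t' \<le> T0 then g t' else h t') \<le> \<bar>t - t'\<bar>"
  proof (cases "t \<le> T0"; cases "t' \<le> T0")
    assume "t \<le> T0" "t' \<le> T0" then show ?thesis using assms(1) unfolding lip_def by simp
  next
    assume "t \<le> T0" "\<not> t' \<le> T0" then show ?thesis using gh by simp
  next
    assume "\<not> t \<le> T0" "t' \<le> T0" then show ?thesis using gh[of t' t] by (simp add: dist_commute abs_minus_commute)
  next
    assume "\<not> t \<le> T0" "\<not> t' \<le> T0" then show ?thesis using assms(2) unfolding lip_def by simp
  qed
qed

lemma clamp_lip: "\<bar>min 1 (max 0 a) - min 1 (max 0 b)\<bar> \<le> \<bar>a - b\<bar>" for a b :: real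
  by (auto simp: min_def max_def abs_if)

lemma seg_dist: "dist (p + a *\<^sub>R v) (p + b *\<^sub>R v) = \<bar>a - b\<bar> * norm v"
  for p v :: "'p::real_normed_vector"
proof -
  have "p + a *\<^sub>R v - (p + b *\<^sub>R v) = (a - b) *\<^sub>R v" by (simp add: scaleR_diff_left)
  then show ?thesis by (simp add: dist_norm)
qed

lemma seg_lip:
  fixes p q :: "'p::real_normed_vector"
  shows "lip (\<lambda>t. p + (min 1 (max 0 ((t - t0) / dist p q))) *\<^sub>R (q - p))"
  unfolding lip_def
proof (intro allI)
  fix t t'
  define d where "d = dist p q"
  have "dist (p + (min 1 (max 0 ((t - t0) / d))) *\<^sub>R (q - p)) (p + (min 1 (max 0 ((t' - t0) / d))) *\<^sub>R (q - p))
     = \<bar>min 1 (max 0 ((t - t0) / d)) - min 1 (max 0 ((t' - t0) / d))\<bar> * d"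
    unfolding seg_dist by (simp add: d_def dist_norm norm_minus_commute)
  also have "\<dots> \<le> \<bar>(t - t0) / d - (t' - t0) / d\<bar> * d"
    by (rule mult_right_mono[OF clamp_lip]) (simp add: d_def)
  also have "\<dots> \<le> \<bar>t - t'\<bar>"
  proof (cases "d = 0")
    case False
    then have "d > 0" by (simp add: d_def)
    then show ?thesis by (simp add: diff_divide_distrib[symmetric] abs_divide)
  qed simp
  finally show "dist (p + (min 1 (max 0 ((t - t0) / dist p q))) *\<^sub>R (q - p)) (p + (min 1 (max 0 ((t' - t0) / dist p q))) *\<^sub>R (q - p)) \<le> \<bar>t - t'\<bar>"
    by (simp add: d_def)
qed

lemma sched_move:
  fixes pos :: "'a \<Rightarrow> 'p::real_normed_vector"
  assumes "r \<notin> S" "sched pos r q (t0 + dist p q) S T"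
  shows "sched pos r p t0 S T"
proof -
  define d where "d = dist p q"
  obtain traj wake waker where
    root: "\<forall>t. t \<le> t0 + d \<longrightarrow> traj r t = q" and
    lp: "\<forall>x\<in>insert r S. lip (traj x)" and
    sl: "\<forall>s\<in>S. \<forall>t. t \<le> wake s \<longrightarrow> traj s t = pos s" and
    wk: "\<forall>s\<in>S. t0 + d \<le> wake s \<and> wake s \<le> T \<and> waker s \<in> insert r S \<and>
        (waker s = r \<or> wake (waker s) < wake s) \<and> traj (waker s) (wake s) = pos s"
    using assms(2) unfolding sched_def d_def by blast
  define seg where "seg = (\<lambda>t. p + (min 1 (max 0 ((t - t0) / dist p q))) *\<^sub>R (q - p))"
  define rt where "rt = (\<lambda>t. if t \<le> t0 + d then seg t else traj r t)"
  define traj' where "traj' = (\<lambda>x. if x = r then rt else traj x)"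
  have segend: "seg (t0 + d) = q"
  proof (cases "d = 0")
    case True then show ?thesis by (simp add: seg_def d_def)
  next
    case False then have "d > 0" by (simp add: d_def)
    then show ?thesis by (simp add: seg_def d_def[symmetric])
  qed
  have segstart: "seg t = p" if "t \<le> t0" for t
  proof (cases "d = 0")
    case True then show ?thesis by (simp add: seg_def d_def)
  next
    case False then have "d > 0" by (simp add: d_def)
    then have "(t - t0) / d \<le> 0" using that by (simp add: divide_nonpos_pos)
    then show ?thesis by (simp add: seg_def d_def[symmetric])
  qed
  have rtlip: "lip rt"
    unfolding rt_def by (rule lip_glue) (use seg_lip lp root segend in \<open>auto simp: seg_def\<close>)
  have rtlate: "rt t = traj r t" if "t0 + d \<le> t" for t
    using that root segend by (auto simp: rt_def)
  show ?thesis
    unfolding sched_def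
  proof (intro exI[of _ traj'] exI[of _ wake] exI[of _ waker] conjI)
    show "\<forall>t. t \<le> t0 \<longrightarrow> traj' r t = p"
    proof (intro allI impI)
      fix t assume "t \<le> t0"
      moreover have "0 \<le> d" by (simp add: d_def)
      ultimately show "traj' r t = p" using segstart by (simp add: traj'_def rt_def)
    qed
    show "\<forall>x\<in>insert r S. lip (traj' x)" using lp rtlip by (auto simp: traj'_def)
    show "\<forall>s\<in>S. \<forall>t. t \<le> wake s \<longrightarrow> traj' s t = pos s" using sl assms(1) by (auto simp: traj'_def)
    show "\<forall>s\<in>S. t0 \<le> wake s \<and> wake s \<le> T \<and> waker s \<in> insert r S \<and>
        (waker s = r \<or> wake (waker s) < wake s) \<and> traj' (waker s) (wake s) = pos s"
    proof
      fix s assume s: "s \<in> S"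
      have "d \<ge> 0" by (simp add: d_def)
      then show "t0 \<le> wake s \<and> wake s \<le> T \<and> waker s \<in> insert r S \<and>
        (waker s = r \<or> wake (waker s) < wake s) \<and> traj' (waker s) (wake s) = pos s"
        using wk s rtlate[of "wake s"] by (auto simp: traj'_def)
    qed
  qed
qed

lemma sched_split:
  fixes pos :: "'a \<Rightarrow> 'p::real_normed_vector"
  assumes "r \<notin> S1" "r \<notin> S2" "s \<notin> S1" "s \<notin> S2" "r \<noteq> s" "S1 \<inter> S2 = {}" "t0 \<le> T"
    and h1: "sched pos r (pos s) t0 S1 T" and h2: "sched pos s (pos s) t0 S2 T"
  shows "sched pos r (pos s) t0 (insert s (S1 \<union> S2)) T"
proof -
  obtain traj1 wake1 waker1 where
    root1: "\<forall>t. t \<le> t0 \<longrightarrow> traj1 r t = pos s" and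
    lp1: "\<forall>x\<in>insert r S1. lip (traj1 x)" and
    sl1: "\<forall>x\<in>S1. \<forall>t. t \<le> wake1 x \<longrightarrow> traj1 x t = pos x" and
    wk1: "\<forall>x\<in>S1. t0 \<le> wake1 x \<and> wake1 x \<le> T \<and> waker1 x \<in> insert r S1 \<and>
        (waker1 x = r \<or> wake1 (waker1 x) < wake1 x) \<and> traj1 (waker1 x) (wake1 x) = pos x"
    using h1 unfolding sched_def by blast
  obtain traj2 wake2 waker2 where
    root2: "\<forall>t. t \<le> t0 \<longrightarrow> traj2 s t = pos s" and
    lp2: "\<forall>x\<in>insert s S2. lip (traj2 x)" and
    sl2: "\<forall>x\<in>S2. \<forall>t. t \<le> wake2 x \<longrightarrow> traj2 x t = pos x" and
    wk2: "\<forall>x\<in>S2. t0 \<le> wake2 x \<and> wake2 x \<le> T \<and> waker2 x \<in> insert s S2 \<and>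
        (waker2 x = s \<or> wake2 (waker2 x) < wake2 x) \<and> traj2 (waker2 x) (wake2 x) = pos x"
    using h2 unfolding sched_def by blast
  define traj where "traj = (\<lambda>x. if x \<in> insert s S2 then traj2 x else traj1 x)"
  define wake where "wake = (\<lambda>x. if x = s then t0 else if x \<in> S2 then wake2 x else wake1 x)"
  define waker where "waker = (\<lambda>x. if x = s then r else if x \<in> S2 then
      (if waker2 x = s \<and> wake2 x = t0 then r else waker2 x) else waker1 x)"
  show ?thesis
    unfolding sched_def
  proof (intro exI[of _ traj] exI[of _ wake] exI[of _ waker] conjI)
    show "\<forall>t. t \<le> t0 \<longrightarrow> traj r t = pos s" using root1 assms by (auto simp: traj_def)
    show "\<forall>x\<in>insert r (insert s (S1 \<union> S2)). lip (traj x)"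
      using lp1 lp2 assms by (auto simp: traj_def)
    show "\<forall>x\<in>insert s (S1 \<union> S2). \<forall>t. t \<le> wake x \<longrightarrow> traj x t = pos x"
      using sl1 sl2 root2 assms by (auto simp: traj_def wake_def)
    show "\<forall>x\<in>insert s (S1 \<union> S2). t0 \<le> wake x \<and> wake x \<le> T \<and> waker x \<in> insert r (insert s (S1 \<union> S2)) \<and>
        (waker x = r \<or> wake (waker x) < wake x) \<and> traj (waker x) (wake x) = pos x"
    proof
      fix x assume x: "x \<in> insert s (S1 \<union> S2)"
      consider "x = s" | "x \<in> S2" | "x \<in> S1" "x \<notin> S2" "x \<noteq> s" using x by blast
      then show "t0 \<le> wake x \<and> wake x \<le> T \<and> waker x \<in> insert r (insert s (S1 \<union> S2)) \<and>
        (waker x = r \<or> wake (waker x) < wake x) \<and> traj (waker x) (wake x) = pos x"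
      proof cases
        case 1 then show ?thesis using assms root1 by (auto simp: wake_def waker_def traj_def)
      next
        case 2
        then have xs: "x \<noteq> s" using assms by auto
        from wk2 2 have w2: "t0 \<le> wake2 x" "wake2 x \<le> T" "waker2 x \<in> insert s S2"
          "waker2 x = s \<or> wake2 (waker2 x) < wake2 x" "traj2 (waker2 x) (wake2 x) = pos x" by auto
        show ?thesis
        proof (cases "waker2 x = s \<and> wake2 x = t0")
          case True
          then have "pos x = pos s" using w2(5) root2 by auto
          then show ?thesis using True 2 xs w2 root1 assms by (auto simp: wake_def waker_def traj_def)
        next
          case False
          show ?thesis
          proof (cases "waker2 x = s")
            case True
            then have "wake2 x > t0" using False w2(1) by auto
            then show ?thesis using True 2 xs w2 by (auto simp: wake_def waker_def traj_def)
          next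
            case ws: False
            then have "waker2 x \<in> S2" using w2(3) by auto
            then show ?thesis using ws 2 xs w2 assms by (auto simp: wake_def waker_def traj_def)
          qed
        qed
      next
        case 3
        from wk1 3 have w1: "t0 \<le> wake1 x" "wake1 x \<le> T" "waker1 x \<in> insert r S1"
          "waker1 x = r \<or> wake1 (waker1 x) < wake1 x" "traj1 (waker1 x) (wake1 x) = pos x" by auto
        show ?thesis
        proof (cases "waker1 x = r")
          case True then show ?thesis using 3 w1 assms by (auto simp: wake_def waker_def traj_def)
        next
          case False
          then have "waker1 x \<in> S1" using w1(3) by auto
          then have "waker1 x \<notin> S2" "waker1 x \<noteq> s" using assms by auto
          then show ?thesis using False 3 w1 \<open>waker1 x \<in> S1\<close> assms by (auto simp: wake_def waker_def traj_def)
        qed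
      qed
    qed
  qed
qed

lemma amgm_sqrt:
  fixes X mu :: real
  assumes "0 \<le> X" "0 < mu"
  shows "sqrt X \<le> (X / mu + mu) / 2"
proof -
  have "0 \<le> (sqrt X - mu)^2" by simp
  also have "(sqrt X - mu)^2 = X - 2 * mu * sqrt X + mu^2"
    using assms by (simp add: power2_eq_square algebra_simps)
  finally have "2 * mu * sqrt X \<le> X + mu^2" by linarith
  then have "sqrt X \<le> (X + mu^2) / (2 * mu)" using assms by (simp add: field_simps)
  also have "(X + mu^2) / (2 * mu) = (X / mu + mu) / 2" using assms by (simp add: field_simps power2_eq_square)
  finally show ?thesis .
qed

lemma sq_le_sq: "0 \<le> a \<Longrightarrow> a \<le> b \<Longrightarrow> a^2 \<le> b^2" for a b :: real
  by (simp add: power_mono)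

lemma crude0:
  fixes d1 d2 a b c w :: real
  assumes "\<bar>d1\<bar> \<le> a * w" "\<bar>d2\<bar> \<le> b * w" "a^2 + b^2 \<le> c^2" "0 \<le> c" "0 \<le> w"
  shows "sqrt (d1^2 + d2^2) \<le> c * w"
proof -
  have "d1^2 \<le> (a*w)^2" using assms(1) by (metis abs_ge_zero power2_abs sq_le_sq)
  moreover have "d2^2 \<le> (b*w)^2" using assms(2) by (metis abs_ge_zero power2_abs sq_le_sq)
  ultimately have "d1^2 + d2^2 \<le> (a^2 + b^2) * w^2" by (simp add: power_mult_distrib algebra_simps)
  also have "\<dots> \<le> c^2 * w^2" using assms(3) by (simp add: mult_right_mono)
  also have "\<dots> = (c*w)^2" by (simp add: power_mult_distrib)
  finally have "sqrt (d1^2 + d2^2) \<le> sqrt ((c*w)^2)" by (rule real_sqrt_le_mono)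
  also have "\<dots> = c * w" using assms by simp
  finally show ?thesis .
qed

lemma crude:
  fixes d1 d2 a b c w :: real
  assumes "d1 \<le> a * w" "- d1 \<le> a * w" "d2 \<le> b * w" "- d2 \<le> b * w" "a^2 + b^2 \<le> c^2" "0 \<le> c" "0 \<le> w"
  shows "sqrt (d1^2 + d2^2) \<le> c * w"
  using crude0[of d1 a w d2 b c] assms by (simp add: abs_le_iff)

lemma C3n:
  fixes x y u v a b :: real
  assumes "-1/2 \<le> y" "y \<le> x" "x \<le> 0" "0 \<le> u" "u \<le> 1/2" "-1/2 \<le> v" "v \<le> 0"
    "0 \<le> a" "a \<le> 1/2" "0 \<le> b" "b \<le> 1/2"
  shows "sqrt ((x - u)^2 + (y - v)^2) + sqrt ((u - a)^2 + (v - b)^2) \<le> 107/50"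
proof -
  define P where "P = (x - u)^2 + (y - v)^2"
  define Q where "Q = (u - a)^2 + (v - b)^2"
  define t where "t = max u (1/2 - u)"
  have P: "P \<le> (u + 1/2)^2 + (v + 1/2)^2"
  proof (cases "y \<le> v")
    case True
    have "(x - u)^2 = (u - x)^2" by (simp add: power2_commute)
    also have "\<dots> \<le> (u + 1/2)^2" using assms by (intro sq_le_sq) auto
    finally have 1: "(x - u)^2 \<le> (u + 1/2)^2" .
    have "(y - v)^2 = (v - y)^2" by (simp add: power2_commute)
    also have "\<dots> \<le> (v + 1/2)^2" using assms True by (intro sq_le_sq) auto
    finally show ?thesis using 1 by (simp add: P_def)
  next
    case False
    have "(x - u)^2 + (y - v)^2 \<le> (u - x)^2 + (x - v)^2"
    proof -
      have "(y - v)^2 = (y - v)^2" ..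
      have "(y - v)^2 \<le> (x - v)^2" using assms False by (intro sq_le_sq) auto
      then show ?thesis by (simp add: power2_commute)
    qed
    also have "\<dots> \<le> ((u - x) + (x - v))^2"
    proof -
      have "0 \<le> (u - x) * (x - v)" using assms False by (intro mult_nonneg_nonneg) auto
      then show ?thesis by (simp add: power2_eq_square algebra_simps)
    qed
    also have "\<dots> = (u - v)^2" by simp
    also have "\<dots> \<le> (u + 1/2)^2" using assms by (intro sq_le_sq) auto
    finally show ?thesis unfolding P_def by (smt (verit) zero_le_power2)
  qed
  have Q: "Q \<le> t^2 + (1/2 - v)^2"
  proof -
    have "\<bar>u - a\<bar> \<le> t" using assms by (auto simp: t_def max_def)
    then have "(u - a)^2 \<le> t^2" by (metis abs_ge_zero power2_abs sq_le_sq)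
    moreover have "(v - b)^2 \<le> (1/2 - v)^2"
    proof -
      have "(v - b)^2 = (b - v)^2" by (simp add: power2_commute)
      also have "\<dots> \<le> (1/2 - v)^2" using assms by (intro sq_le_sq) auto
      finally show ?thesis .
    qed
    ultimately show ?thesis by (simp add: Q_def)
  qed
  have c1: "(u + 1/2)^2 \<le> 3/2 * (u + 1/2) - 1/2"
  proof -
    have "u * (1/2 - u) \<ge> 0" using assms by (intro mult_nonneg_nonneg) auto
    then show ?thesis by (simp add: power2_eq_square algebra_simps)
  qed
  have c2: "(v + 1/2)^2 \<le> 1/2 * (v + 1/2)"
  proof -
    have "(v + 1/2) * (- v) \<ge> 0" using assms by (intro mult_nonneg_nonneg) auto
    then show ?thesis by (simp add: power2_eq_square algebra_simps)
  qed
  have c3: "t^2 \<le> 3/4 * t - 1/8"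
  proof -
    have "t \<ge> 1/4" "t \<le> 1/2" using assms by (auto simp: t_def max_def)
    then have "(t - 1/4) * (1/2 - t) \<ge> 0" by (intro mult_nonneg_nonneg) auto
    then show ?thesis by (simp add: power2_eq_square algebra_simps)
  qed
  have c4: "(1/2 - v)^2 \<le> 3/2 * (1/2 - v) - 1/2"
  proof -
    have "(v + 1/2) * (- v) \<ge> 0" using assms by (intro mult_nonneg_nonneg) auto
    then show ?thesis by (simp add: power2_eq_square algebra_simps)
  qed
  have tle: "t \<le> 1/2" using assms by (auto simp: t_def max_def)
  have s1: "sqrt P \<le> (P / 1 + 1) / 2" by (rule amgm_sqrt) (auto simp: P_def)
  have s2: "sqrt Q \<le> (Q / (559/500) + 559/500) / 2" by (rule amgm_sqrt) (auto simp: Q_def)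
  have "sqrt P + sqrt Q \<le> 107/50"
    using s1 s2 P Q c1 c2 c3 c4 tle assms by (simp add: field_simps)
  then show ?thesis by (simp add: P_def Q_def)
qed

lemma sqrt_scale:
  fixes w p q :: real
  assumes "0 < w"
  shows "sqrt (p^2 + q^2) = w * sqrt ((p/w)^2 + (q/w)^2)"
proof -
  have "p^2 + q^2 = w^2 * ((p/w)^2 + (q/w)^2)" using assms by (simp add: field_simps)
  then have "sqrt (p^2 + q^2) = sqrt (w^2) * sqrt ((p/w)^2 + (q/w)^2)" by (simp add: real_sqrt_mult)
  then show ?thesis using assms by simp
qed

lemma C3:
  fixes xs ys xu yu xa ya w :: real
  assumes "0 \<le> w" "-w/2 \<le> ys" "ys \<le> xs" "xs \<le> 0" "0 \<le> xu" "xu \<le> w/2" "-w/2 \<le> yu" "yu \<le> 0"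
    "0 \<le> xa" "xa \<le> w/2" "0 \<le> ya" "ya \<le> w/2"
  shows "sqrt ((xs - xu)^2 + (ys - yu)^2) + sqrt ((xu - xa)^2 + (yu - ya)^2) \<le> 107/50 * w"
proof (cases "w = 0")
  case True
  then have "xs = 0" "ys = 0" "xu = 0" "yu = 0" "xa = 0" "ya = 0" using assms by auto
  then show ?thesis using True by simp
next
  case False
  then have w: "0 < w" using assms by simp
  have n: "sqrt ((xs/w - xu/w)^2 + (ys/w - yu/w)^2) + sqrt ((xu/w - xa/w)^2 + (yu/w - ya/w)^2) \<le> 107/50"
    by (rule C3n) (use assms w in \<open>auto simp: field_simps\<close>)
  have e1: "sqrt ((xs - xu)^2 + (ys - yu)^2) = w * sqrt ((xs/w - xu/w)^2 + (ys/w - yu/w)^2)"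
    using sqrt_scale[OF w, of "xs - xu" "ys - yu"] by (simp add: diff_divide_distrib)
  have e2: "sqrt ((xu - xa)^2 + (yu - ya)^2) = w * sqrt ((xu/w - xa/w)^2 + (yu/w - ya/w)^2)"
    using sqrt_scale[OF w, of "xu - xa" "yu - ya"] by (simp add: diff_divide_distrib)
  show ?thesis unfolding e1 e2 using n w
    by (metis distrib_left mult.commute mult_le_cancel_left_pos)
qed

lemma rect_step:
  fixes pos :: "'a \<Rightarrow> 'p::real_normed_vector"
  assumes r': "r' \<notin> H" and HNF: "H = N \<union> F" "N \<inter> F = {}"
    and IH: "\<And>r'' S' q t. S' \<subseteq> N \<or> S' \<subseteq> F \<Longrightarrow> r'' \<notin> S' \<Longrightarrow>
               (\<forall>x\<in>S'. t + dist q (pos x) + 107/25*(w/2) \<le> T) \<Longrightarrow> sched pos r'' q t S' T"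
    and chN: "\<forall>s'\<in>N. \<forall>x\<in>H. dist (pos s0) (pos s') + dist (pos s') (pos x) \<le> 107/50*w"
    and ch0: "\<forall>x\<in>H. dist (pos s0) (pos x) \<le> 107/50*w"
    and time: "t1 + 107/25*w \<le> T" and w: "0 \<le> w"
  shows "sched pos r' (pos s0) t1 H T"
proof (cases "N = {}")
  case True
  then have HF: "H = F" using HNF by simp
  show ?thesis unfolding HF
    by (rule IH) (use r' HF ch0 time in auto)
next
  case False
  then obtain s' where s': "s' \<in> N" by blast
  define t2 where "t2 = t1 + dist (pos s0) (pos s')"
  have Hs: "H = insert s' ((N - {s'}) \<union> F)" using HNF s' by auto
  have d0: "dist (pos s0) (pos s') \<le> 107/50*w" using chN[rule_format, of s' s'] s' HNF by simp
  have "sched pos r' (pos s') t2 (insert s' ((N - {s'}) \<union> F)) T"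
  proof (rule sched_split)
    show "r' \<notin> N - {s'}" "r' \<notin> F" using r' HNF by auto
    show "s' \<notin> N - {s'}" "s' \<notin> F" using s' HNF by auto
    show "r' \<noteq> s'" using r' s' HNF by auto
    show "(N - {s'}) \<inter> F = {}" using HNF by auto
    show "t2 \<le> T" using d0 time w by (simp add: t2_def)
    show "sched pos r' (pos s') t2 (N - {s'}) T"
    proof (rule IH)
      show "\<forall>x\<in>N - {s'}. t2 + dist (pos s') (pos x) + 107/25*(w/2) \<le> T"
      proof
        fix x assume "x \<in> N - {s'}"
        then have "x \<in> H" using HNF by auto
        then have "dist (pos s0) (pos s') + dist (pos s') (pos x) \<le> 107/50*w" using chN s' by blast
        then show "t2 + dist (pos s') (pos x) + 107/25*(w/2) \<le> T" using time by (simp add: t2_def)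
      qed
    qed (use r' HNF in auto)
    show "sched pos s' (pos s') t2 F T"
    proof (rule IH)
      show "\<forall>x\<in>F. t2 + dist (pos s') (pos x) + 107/25*(w/2) \<le> T"
      proof
        fix x assume "x \<in> F"
        then have "x \<in> H" using HNF by auto
        then have "dist (pos s0) (pos s') + dist (pos s') (pos x) \<le> 107/50*w" using chN s' by blast
        then show "t2 + dist (pos s') (pos x) + 107/25*(w/2) \<le> T" using time by (simp add: t2_def)
      qed
    qed (use s' HNF in auto)
  qed
  then have "sched pos r' (pos s') (t1 + dist (pos s0) (pos s')) H T" using Hs t2_def by simp
  then show ?thesis by (rule sched_move[OF r'])
qed

lemma absI: "c - r \<le> a \<Longrightarrow> a \<le> c + r \<Longrightarrow> \<bar>a - c\<bar> \<le> (r::real)"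
  by (simp add: abs_le_iff)

lemma square_core:
  fixes pos :: "'a \<Rightarrow> 'p::real_normed_vector" and A B :: "'a \<Rightarrow> real"
  assumes r: "r \<notin> S" and s: "s \<in> S" and w: "0 \<le> w"
    and box: "\<forall>x\<in>S. \<bar>A x - ca\<bar> \<le> w/2 \<and> \<bar>B x - cb\<bar> \<le> w/2"
    and sq: "A s \<le> ca" "B s - cb \<le> A s - ca"
    and distf: "\<forall>x\<in>S. \<forall>y\<in>S. dist (pos x) (pos y) = sqrt ((A x - A y)^2 + (B x - B y)^2)"
    and time: "t1 + 107/25*w \<le> T"
    and IH: "\<And>r' S' q t. S' \<subseteq> S - {s} \<Longrightarrow> r' \<notin> S' \<Longrightarrow>
         (\<exists>a1 b1. \<forall>x\<in>S'. \<bar>A x - a1\<bar> \<le> w/4 \<and> \<bar>B x - b1\<bar> \<le> w/4) \<Longrightarrow>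
         (\<forall>x\<in>S'. t + dist q (pos x) + 107/25*(w/2) \<le> T) \<Longrightarrow> sched pos r' q t S' T"
  shows "sched pos r (pos s) t1 S T"
proof -
  define H1 where "H1 = {x \<in> S - {s}. A x \<le> ca}"
  define H2 where "H2 = {x \<in> S - {s}. ca < A x}"
  define N1 where "N1 = {x \<in> H1. B x \<le> cb}"
  define F1 where "F1 = {x \<in> H1. cb < B x}"
  define N2 where "N2 = {x \<in> H2. B x \<le> cb}"
  define F2 where "F2 = {x \<in> H2. cb < B x}"
  have bx: "ca - w/2 \<le> A x" "A x \<le> ca + w/2" "cb - w/2 \<le> B x" "B x \<le> cb + w/2" if "x \<in> S" for x
  proof -
    from box that have h: "\<bar>A x - ca\<bar> \<le> w/2" "\<bar>B x - cb\<bar> \<le> w/2" by auto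
    show "ca - w/2 \<le> A x" "A x \<le> ca + w/2" "cb - w/2 \<le> B x" "B x \<le> cb + w/2"
      using abs_le_D1[OF h(1)] abs_le_D2[OF h(1)] abs_le_D1[OF h(2)] abs_le_D2[OF h(2)] by linarith+
  qed
  note bs = bx[OF s]
  have dS: "dist (pos x) (pos y) = sqrt ((A x - A y)^2 + (B x - B y)^2)" if "x \<in> S" "y \<in> S" for x y
    using distf that by blast
  note c71 = crude[of _ "1/2" w _ "1/2" "71/100"]
  note c112 = crude[of _ "1/2" w _ 1 "112/100"]
  note c112' = crude[of _ 1 w _ "1/2" "112/100"]
  note c142 = crude[of _ 1 w _ 1 "142/100"]
  have ch0: "dist (pos s) (pos x) \<le> 107/50*w" if "x \<in> S" for x
  proof -
    have "dist (pos s) (pos x) \<le> 142/100 * w"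
      unfolding dS[OF s that] by (rule c142) (use bs bx[OF that] w in \<open>auto simp: abs_le_iff power2_eq_square\<close>)
    then show ?thesis using w by linarith
  qed
  have h1: "sched pos r (pos s) t1 H1 T"
  proof (rule rect_step[where N = N1 and F = F1 and w = w])
    show "r \<notin> H1" "H1 = N1 \<union> F1" "N1 \<inter> F1 = {}" using r by (auto simp: H1_def N1_def F1_def)
    show "sched pos r'' q t S' T" if "S' \<subseteq> N1 \<or> S' \<subseteq> F1" "r'' \<notin> S'"
      "\<forall>x\<in>S'. t + dist q (pos x) + 107/25*(w/2) \<le> T" for r'' S' q t
      using that(1)
    proof
      assume "S' \<subseteq> N1"
      show ?thesis
      proof (rule IH[OF _ that(2) _ that(3)])
        show "S' \<subseteq> S - {s}" using \<open>S' \<subseteq> N1\<close> by (auto simp: N1_def H1_def)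
        show "\<exists>a1 b1. \<forall>x\<in>S'. \<bar>A x - a1\<bar> \<le> w/4 \<and> \<bar>B x - b1\<bar> \<le> w/4"
          by (rule exI[of _ "ca - w/4"], rule exI[of _ "cb - w/4"], intro ballI conjI absI)
            (use bx \<open>S' \<subseteq> N1\<close> in \<open>(force simp: N1_def H1_def subset_iff)+\<close>)
      qed
    next
      assume "S' \<subseteq> F1"
      show ?thesis
      proof (rule IH[OF _ that(2) _ that(3)])
        show "S' \<subseteq> S - {s}" using \<open>S' \<subseteq> F1\<close> by (auto simp: F1_def H1_def)
        show "\<exists>a1 b1. \<forall>x\<in>S'. \<bar>A x - a1\<bar> \<le> w/4 \<and> \<bar>B x - b1\<bar> \<le> w/4"
          by (rule exI[of _ "ca - w/4"], rule exI[of _ "cb + w/4"], intro ballI conjI absI)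
            (use bx \<open>S' \<subseteq> F1\<close> in \<open>(force simp: F1_def H1_def subset_iff)+\<close>)
      qed
    qed
    show "\<forall>s'\<in>N1. \<forall>x\<in>H1. dist (pos s) (pos s') + dist (pos s') (pos x) \<le> 107/50*w"
    proof (intro ballI)
      fix s' x assume s': "s' \<in> N1" and x: "x \<in> H1"
      have s'S: "s' \<in> S" and xS: "x \<in> S" using s' x by (auto simp: N1_def H1_def)
      have "dist (pos s) (pos s') \<le> 71/100 * w"
        unfolding dS[OF s s'S] by (rule c71) (use bs bx[OF s'S] w s' sq in \<open>auto simp: abs_le_iff power2_eq_square N1_def H1_def\<close>)
      moreover have "dist (pos s') (pos x) \<le> 112/100 * w"
        unfolding dS[OF s'S xS] by (rule c112) (use bx[OF xS] bx[OF s'S] w s' x in \<open>auto simp: abs_le_iff power2_eq_square N1_def H1_def\<close>)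
      ultimately show "dist (pos s) (pos s') + dist (pos s') (pos x) \<le> 107/50*w" using w by linarith
    qed
    show "\<forall>x\<in>H1. dist (pos s) (pos x) \<le> 107/50*w" using ch0 by (auto simp: H1_def)
  qed (use time w in auto)
  have h2: "sched pos s (pos s) t1 H2 T"
  proof (rule rect_step[where N = N2 and F = F2 and w = w])
    show "s \<notin> H2" "H2 = N2 \<union> F2" "N2 \<inter> F2 = {}" by (auto simp: H2_def N2_def F2_def)
    show "sched pos r'' q t S' T" if "S' \<subseteq> N2 \<or> S' \<subseteq> F2" "r'' \<notin> S'"
      "\<forall>x\<in>S'. t + dist q (pos x) + 107/25*(w/2) \<le> T" for r'' S' q t
      using that(1)
    proof
      assume "S' \<subseteq> N2"
      show ?thesis
      proof (rule IH[OF _ that(2) _ that(3)])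
        show "S' \<subseteq> S - {s}" using \<open>S' \<subseteq> N2\<close> by (auto simp: N2_def H2_def)
        show "\<exists>a1 b1. \<forall>x\<in>S'. \<bar>A x - a1\<bar> \<le> w/4 \<and> \<bar>B x - b1\<bar> \<le> w/4"
          by (rule exI[of _ "ca + w/4"], rule exI[of _ "cb - w/4"], intro ballI conjI absI)
            (use bx \<open>S' \<subseteq> N2\<close> in \<open>(force simp: N2_def H2_def subset_iff)+\<close>)
      qed
    next
      assume "S' \<subseteq> F2"
      show ?thesis
      proof (rule IH[OF _ that(2) _ that(3)])
        show "S' \<subseteq> S - {s}" using \<open>S' \<subseteq> F2\<close> by (auto simp: F2_def H2_def)
        show "\<exists>a1 b1. \<forall>x\<in>S'. \<bar>A x - a1\<bar> \<le> w/4 \<and> \<bar>B x - b1\<bar> \<le> w/4"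
          by (rule exI[of _ "ca + w/4"], rule exI[of _ "cb + w/4"], intro ballI conjI absI)
            (use bx \<open>S' \<subseteq> F2\<close> in \<open>(force simp: F2_def H2_def subset_iff)+\<close>)
      qed
    qed
    show "\<forall>s'\<in>N2. \<forall>x\<in>H2. dist (pos s) (pos s') + dist (pos s') (pos x) \<le> 107/50*w"
    proof (intro ballI)
      fix s' x assume s': "s' \<in> N2" and x: "x \<in> H2"
      have s'S: "s' \<in> S" and xS: "x \<in> S" using s' x by (auto simp: N2_def H2_def)
      show "dist (pos s) (pos s') + dist (pos s') (pos x) \<le> 107/50*w"
      proof (cases "x \<in> N2")
        case True
        have "dist (pos s) (pos s') \<le> 112/100 * w"
          unfolding dS[OF s s'S] by (rule c112') (use bs bx[OF s'S] w s' sq in \<open>auto simp: abs_le_iff power2_eq_square N2_def H2_def\<close>)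
        moreover have "dist (pos s') (pos x) \<le> 71/100 * w"
          unfolding dS[OF s'S xS] by (rule c71) (use bx[OF xS] bx[OF s'S] w s' True in \<open>auto simp: abs_le_iff power2_eq_square N2_def H2_def\<close>)
        ultimately show ?thesis using w by linarith
      next
        case False
        then have xF: "cb < B x" "ca < A x" using x by (auto simp: N2_def H2_def)
        have s'c: "ca < A s'" "B s' \<le> cb" using s' by (auto simp: N2_def H2_def)
        have "sqrt (((A s - ca) - (A s' - ca))^2 + ((B s - cb) - (B s' - cb))^2)
            + sqrt (((A s' - ca) - (A x - ca))^2 + ((B s' - cb) - (B x - cb))^2) \<le> 107/50 * w"
          by (rule C3) (use w bs bx[OF xS] bx[OF s'S] sq xF s'c in \<open>auto simp: abs_le_iff power2_eq_square\<close>)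
        then show ?thesis unfolding dS[OF s s'S] dS[OF s'S xS] by simp
      qed
    qed
    show "\<forall>x\<in>H2. dist (pos s) (pos x) \<le> 107/50*w" using ch0 by (auto simp: H2_def)
  qed (use time w in auto)
  have Seq: "S = insert s (H1 \<union> H2)" using s by (auto simp: H1_def H2_def)
  have "sched pos r (pos s) t1 (insert s (H1 \<union> H2)) T"
    by (rule sched_split[OF _ _ _ _ _ _ _ h1 h2]) (use r s time w in \<open>auto simp: H1_def H2_def\<close>)
  then show ?thesis using Seq by simp
qed

definition coordsok :: "('a \<Rightarrow> 'p::real_normed_vector) \<Rightarrow> 'a set \<Rightarrow> ('a \<Rightarrow> real) \<Rightarrow> ('a \<Rightarrow> real) \<Rightarrow> real \<Rightarrow> real \<Rightarrow> real \<Rightarrow> bool" where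
  "coordsok pos S A B a0 b0 w \<longleftrightarrow>
     (\<forall>x\<in>S. \<forall>y\<in>S. dist (pos x) (pos y) = sqrt ((A x - A y)^2 + (B x - B y)^2)) \<and>
     (\<forall>x\<in>S. \<bar>A x - a0\<bar> \<le> w/2 \<and> \<bar>B x - b0\<bar> \<le> w/2)"

lemma coordsok_swap: "coordsok pos S A B a0 b0 w \<Longrightarrow> coordsok pos S B A b0 a0 w"
  unfolding coordsok_def by (simp add: add.commute)

lemma coordsok_flip:
  assumes "coordsok pos S A B a0 b0 w" "\<bar>\<sigma>\<bar> = 1" "\<bar>\<tau>\<bar> = 1"
  shows "coordsok pos S (\<lambda>x. \<sigma> * A x) (\<lambda>x. \<tau> * B x) (\<sigma> * a0) (\<tau> * b0) w"
proof -
  have e: "(c * a - c * b)^2 = (a - b)^2" if "\<bar>c\<bar> = 1" for c a b :: real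
  proof -
    have "(c * a - c * b)^2 = c^2 * (a - b)^2" by (simp add: power2_eq_square algebra_simps)
    also have "c^2 = 1" using that by (metis abs_power2 one_power2 power2_abs)
    finally show ?thesis by simp
  qed
  have f: "\<bar>c * a - c * b\<bar> = \<bar>a - b\<bar>" if "\<bar>c\<bar> = 1" for c a b :: real
  proof -
    have "\<bar>c * a - c * b\<bar> = \<bar>c\<bar> * \<bar>a - b\<bar>" by (simp add: abs_mult[symmetric] algebra_simps)
    then show ?thesis using that by simp
  qed
  show ?thesis using assms unfolding coordsok_def by (simp add: e f)
qed

lemma wlog_coords:
  assumes "coordsok pos S A B a0 b0 w"
  shows "\<exists>A' B' a0' b0'. coordsok pos S A' B' a0' b0' w \<and> A' s \<le> a0' \<and> B' s - b0' \<le> A' s - a0'"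
proof -
  have gen: "\<exists>A' B' a0' b0'. coordsok pos S A' B' a0' b0' w \<and> A' s \<le> a0' \<and> B' s - b0' \<le> A' s - a0'"
    if ok: "coordsok pos S F G f0 g0 w" and d: "\<bar>F s - f0\<bar> \<le> \<bar>G s - g0\<bar>" for F G f0 g0
  proof -
    define \<sigma> :: real where "\<sigma> = (if F s \<le> f0 then 1 else -1)"
    define \<tau> :: real where "\<tau> = (if G s \<le> g0 then 1 else -1)"
    have "coordsok pos S (\<lambda>x. \<sigma> * F x) (\<lambda>x. \<tau> * G x) (\<sigma> * f0) (\<tau> * g0) w"
    proof (rule coordsok_flip[OF ok])
      show "\<bar>\<sigma>\<bar> = 1" by (simp add: \<sigma>_def)
      show "\<bar>\<tau>\<bar> = 1" by (simp add: \<tau>_def)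
    qed
    moreover have "\<sigma> * F s \<le> \<sigma> * f0" by (auto simp: \<sigma>_def)
    moreover have "\<tau> * G s - \<tau> * g0 \<le> \<sigma> * F s - \<sigma> * f0"
      using d by (auto simp: \<sigma>_def \<tau>_def abs_if split: if_splits)
    ultimately show ?thesis by blast
  qed
  show ?thesis
  proof (cases "\<bar>A s - a0\<bar> \<le> \<bar>B s - b0\<bar>")
    case True then show ?thesis using gen[OF assms] by blast
  next
    case False then show ?thesis using gen[OF coordsok_swap[OF assms]] by auto
  qed
qed

lemma main_lemma:
  fixes pos :: "'a \<Rightarrow> 'p::real_normed_vector"
  assumes "finite S"
  shows "\<forall>A B r p t0 a0 b0 w. r \<notin> S \<longrightarrow> 0 \<le> w \<longrightarrow> coordsok pos S A B a0 b0 w \<longrightarrow>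
           (\<forall>x\<in>S. t0 + dist p (pos x) + 107/25*w \<le> T) \<longrightarrow> sched pos r p t0 S T"
  using assms
proof (induction "card S" arbitrary: S rule: less_induct)
  case less
  show ?case
  proof (intro allI impI)
    fix A B r p t0 a0 b0 w
    assume r: "r \<notin> S" and w: "0 \<le> w" and ok: "coordsok pos S A B a0 b0 w"
      and time: "\<forall>x\<in>S. t0 + dist p (pos x) + 107/25*w \<le> T"
    show "sched pos r p t0 S T"
    proof (cases "S = {}")
      case True then show ?thesis by (simp add: sched_empty)
    next
      case False
      then obtain s where s: "s \<in> S" by blast
      obtain A' B' a0' b0' where ok': "coordsok pos S A' B' a0' b0' w"
        and q: "A' s \<le> a0'" "B' s - b0' \<le> A' s - a0'"
        using wlog_coords[OF ok, of s] by blast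
      have "sched pos r (pos s) (t0 + dist p (pos s)) S T"
      proof (rule square_core[where A = A' and B = B' and ca = a0' and cb = b0' and w = w])
        show "\<forall>x\<in>S. \<bar>A' x - a0'\<bar> \<le> w/2 \<and> \<bar>B' x - b0'\<bar> \<le> w/2"
          "\<forall>x\<in>S. \<forall>y\<in>S. dist (pos x) (pos y) = sqrt ((A' x - A' y)^2 + (B' x - B' y)^2)"
          using ok' by (auto simp: coordsok_def)
        show "t0 + dist p (pos s) + 107/25*w \<le> T" using time s by blast
        show "sched pos r' q t S' T" if S': "S' \<subseteq> S - {s}" "r' \<notin> S'"
          and bx: "\<exists>a1 b1. \<forall>x\<in>S'. \<bar>A' x - a1\<bar> \<le> w/4 \<and> \<bar>B' x - b1\<bar> \<le> w/4"
          and tm: "\<forall>x\<in>S'. t + dist q (pos x) + 107/25*(w/2) \<le> T" for r' S' q t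
        proof -
          obtain a1 b1 where bx': "\<forall>x\<in>S'. \<bar>A' x - a1\<bar> \<le> w/4 \<and> \<bar>B' x - b1\<bar> \<le> w/4" using bx by blast
          have fin: "finite S'" using less.prems S' by (meson finite_Diff finite_subset)
          have "S' \<subset> S" using S' s by blast
          then have lt: "card S' < card S" using less.prems by (rule psubset_card_mono[rotated])
          have "S' \<subseteq> S" using S' by blast
          then have dd: "\<forall>x\<in>S'. \<forall>y\<in>S'. dist (pos x) (pos y) = sqrt ((A' x - A' y)^2 + (B' x - B' y)^2)"
            using ok' unfolding coordsok_def by blast
          have okS': "coordsok pos S' A' B' a1 b1 (w/2)"
            using dd bx' unfolding coordsok_def by simp
          show ?thesis
          proof -
            have w2: "0 \<le> w/2" using w by simp
            show ?thesis using less.hyps[OF lt fin] S'(2) w2 okS' tm by blast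
          qed
        qed
      qed (use r s w q in auto)
      then show ?thesis by (rule sched_move[OF r])
    qed
  qed
qed

lemma norm_orth:
  fixes u v :: "real^2"
  assumes "norm u = 1" "norm v = 1" "u \<bullet> v = 0"
  shows "norm (a *\<^sub>R u + b *\<^sub>R v) = sqrt (a^2 + b^2)"
proof -
  have uu: "u \<bullet> u = 1" using assms(1) by (simp add: dot_square_norm)
  have vv: "v \<bullet> v = 1" using assms(2) by (simp add: dot_square_norm)
  have vu: "v \<bullet> u = 0" using assms(3) by (simp add: inner_commute)
  have "(a *\<^sub>R u + b *\<^sub>R v) \<bullet> (a *\<^sub>R u + b *\<^sub>R v) = a^2 + b^2"
    by (simp add: inner_add_left inner_add_right uu vv vu assms(3) power2_eq_square)
  then show ?thesis by (simp add: norm_eq_sqrt_inner)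
qed

theorem lemma3:
  fixes r :: 'a and S :: "'a set" and pos :: "'a \<Rightarrow> real^2"
    and c u v :: "real^2" and R :: real
  assumes "finite S" and "r \<notin> S"
    and "norm u = 1" and "norm v = 1" and "u \<bullet> v = 0"
    and "R \<ge> 0"
    and "pos ` S \<subseteq> square c u v R"
  shows "\<exists>traj wake waker. wakeup_schedule r c S pos traj wake waker \<and>
           (\<forall>s\<in>S. wake s \<le> 5 * R)"
proof -
  define A where "A x = (pos x - c) \<bullet> u" for x
  define B where "B x = (pos x - c) \<bullet> v" for x
  have uu: "u \<bullet> u = 1" using assms(3) by (simp add: dot_square_norm)
  have vv: "v \<bullet> v = 1" using assms(4) by (simp add: dot_square_norm)
  have vu: "v \<bullet> u = 0" using assms(5) by (simp add: inner_commute)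
  have rep: "pos x = c + A x *\<^sub>R u + B x *\<^sub>R v \<and> \<bar>A x\<bar> \<le> R/2 \<and> \<bar>B x\<bar> \<le> R/2" if x: "x \<in> S" for x
  proof -
    from assms(7) x obtain a b where ab: "pos x = c + a *\<^sub>R u + b *\<^sub>R v" "\<bar>a\<bar> \<le> R/2" "\<bar>b\<bar> \<le> R/2"
      unfolding square_def by blast
    have "A x = a" unfolding A_def ab(1)
      by (simp add: inner_add_left uu vu)
    moreover have "B x = b" unfolding B_def ab(1)
      by (simp add: inner_add_left vv assms(5))
    ultimately show ?thesis using ab by simp
  qed
  have distf: "\<forall>x\<in>S. \<forall>y\<in>S. dist (pos x) (pos y) = sqrt ((A x - A y)^2 + (B x - B y)^2)"
  proof (intro ballI)
    fix x y assume x: "x \<in> S" and y: "y \<in> S"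
    have "pos x - pos y = (A x - A y) *\<^sub>R u + (B x - B y) *\<^sub>R v"
      using rep[OF x] rep[OF y] by (simp add: scaleR_diff_left algebra_simps)
    then show "dist (pos x) (pos y) = sqrt ((A x - A y)^2 + (B x - B y)^2)"
      by (simp add: dist_norm norm_orth[OF assms(3,4,5)])
  qed
  have ok: "coordsok pos S A B 0 0 R"
    unfolding coordsok_def using distf rep by auto
  have tm: "\<forall>x\<in>S. 0 + dist c (pos x) + 107/25*R \<le> 5*R"
  proof
    fix x assume x: "x \<in> S"
    have "c - pos x = - (A x *\<^sub>R u + B x *\<^sub>R v)" using rep[OF x] by simp
    then have "dist c (pos x) = sqrt ((A x)^2 + (B x)^2)"
      by (simp add: dist_norm norm_orth[OF assms(3,4,5)] del: minus_add_distrib)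
    also have "\<dots> \<le> 71/100 * R"
    proof (rule crude[of _ "1/2" R _ "1/2" "71/100"])
      have h: "\<bar>A x\<bar> \<le> R/2" "\<bar>B x\<bar> \<le> R/2" using rep[OF x] by auto
      show "A x \<le> 1/2 * R" "- A x \<le> 1/2 * R" "B x \<le> 1/2 * R" "- B x \<le> 1/2 * R"
        using abs_le_D1[OF h(1)] abs_le_D2[OF h(1)] abs_le_D1[OF h(2)] abs_le_D2[OF h(2)] by linarith+
    qed (use assms(6) in \<open>auto simp: power2_eq_square\<close>)
    finally show "0 + dist c (pos x) + 107/25*R \<le> 5*R" using assms(6) by simp
  qed
  have "sched pos r c 0 S (5*R)"
    using main_lemma[OF assms(1)] assms(2,6) ok tm by blast
  then obtain traj wake waker where
    root: "\<forall>t. t \<le> 0 \<longrightarrow> traj r t = c" and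
    lp: "\<forall>x\<in>insert r S. lip (traj x)" and
    sl: "\<forall>s\<in>S. \<forall>t. t \<le> wake s \<longrightarrow> traj s t = pos s" and
    wk: "\<forall>s\<in>S. 0 \<le> wake s \<and> wake s \<le> 5*R \<and> waker s \<in> insert r S \<and>
        (waker s = r \<or> wake (waker s) < wake s) \<and> traj (waker s) (wake s) = pos s"
    unfolding sched_def by blast
  define wake' where "wake' = wake(r := 0)"
  have w': "wake' s = wake s" if "s \<in> S" for s using that assms(2) by (auto simp: wake'_def)
  have "wakeup_schedule r c S pos traj wake' waker"
    unfolding wakeup_schedule_def
  proof (intro conjI)
    show "wake' r = 0" by (simp add: wake'_def)
    show "traj r 0 = c" using root by simp
    show "\<forall>p\<in>insert r S. \<forall>t t'. dist (traj p t) (traj p t') \<le> \<bar>t - t'\<bar>"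
      using lp by (simp add: lip_def)
    show "\<forall>s\<in>S. \<forall>t. t \<le> wake' s \<longrightarrow> traj s t = pos s" using sl w' by simp
    show "\<forall>s\<in>S. 0 \<le> wake' s \<and> waker s \<in> insert r S \<and>
        (waker s = r \<or> wake' (waker s) < wake' s) \<and> traj (waker s) (wake' s) = pos s"
    proof
      fix s assume s: "s \<in> S"
      show "0 \<le> wake' s \<and> waker s \<in> insert r S \<and>
        (waker s = r \<or> wake' (waker s) < wake' s) \<and> traj (waker s) (wake' s) = pos s"
      proof (cases "waker s = r")
        case True then show ?thesis using wk s w' by auto
      next
        case False
        then have "waker s \<in> S" using wk s by auto
        then show ?thesis using wk s w' False by auto
      qed
    qed
  qed
  moreover have "\<forall>s\<in>S. wake' s \<le> 5 * R" using wk w' by simp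
  ultimately show ?thesis by blast
qed

end
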